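(* Let $\epsilon\in(0,1)$. Let $G=(V,E)$ be a graph with minimum degree at least $2$ having a vertex of degree at least $3$, let $R\subseteq V$ and $k,\ell\ge 0$. Define $\omega(v)=\deg(v)-2$ for $v\notin R$ and $\omega(v)=0$ for $v\in R$, and sample a vertex $v\in V$ with probability $\omega(v)/\omega(V)$. If there exists a riafd-set $F$ of $G$ of size $k$ with $\deg(F)\ge \frac{4-2\epsilon}{1-\epsilon}(k+\ell)$, then the sampled vertex belongs to $F$ with probability at least $\frac{1}{3-\epsilon}$.
   Context: For $X\subseteq V$, $\deg(X)=\sum_{v\in X}\deg(v)$ and $\omega(X)=\sum_{v\in X}\omega(v)$. A graph is an $\ell$-forest if deleting at most $\ell$ of its edges yields a forest. Given $G$, $R$ and $\ell$, a riafd-set is a set $F\subseteq V\setminus R$ that is independent in $G$ and such that $G-F$ is an $\ell$-forest. *)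

theory Defs
  imports Complex_Main
begin

definition graph :: "'a set \<Rightarrow> 'a set set \<Rightarrow> bool" where
  "graph V E \<longleftrightarrow> finite V \<and> (\<forall>e\<in>E. e \<subseteq> V \<and> card e = 2)"

definition deg :: "'a set set \<Rightarrow> 'a \<Rightarrow> nat" where
  "deg E v = card {e \<in> E. v \<in> e}"

definition is_cycle :: "'a set \<Rightarrow> 'a set set \<Rightarrow> 'a list \<Rightarrow> bool" where
  "is_cycle V E cs \<longleftrightarrow> length cs \<ge> 3 \<and> distinct cs \<and> set cs \<subseteq> V \<and>
     (\<forall>i < length cs. {cs ! i, cs ! ((i + 1) mod length cs)} \<in> E)"

definition forest :: "'a set \<Rightarrow> 'a set set \<Rightarrow> bool" where
  "forest V E \<longleftrightarrow> \<not> (\<exists>cs. is_cycle V E cs)"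

definition l_forest :: "nat \<Rightarrow> 'a set \<Rightarrow> 'a set set \<Rightarrow> bool" where
  "l_forest l V E \<longleftrightarrow> (\<exists>D \<subseteq> E. card D \<le> l \<and> forest V (E - D))"

definition del_verts_E :: "'a set set \<Rightarrow> 'a set \<Rightarrow> 'a set set" where
  "del_verts_E E F = {e \<in> E. e \<inter> F = {}}"

definition independent :: "'a set set \<Rightarrow> 'a set \<Rightarrow> bool" where
  "independent E F \<longleftrightarrow> (\<forall>e\<in>E. \<not> e \<subseteq> F)"

definition riafd_set :: "'a set \<Rightarrow> 'a set set \<Rightarrow> 'a set \<Rightarrow> nat \<Rightarrow> 'a set \<Rightarrow> bool" where
  "riafd_set V E R l F \<longleftrightarrow> F \<subseteq> V - R \<and> independent E F \<and>
     l_forest l (V - F) (del_verts_E E F)"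

definition omega :: "'a set set \<Rightarrow> 'a set \<Rightarrow> 'a \<Rightarrow> real" where
  "omega E R v = (if v \<in> R then 0 else real (deg E v) - 2)"

end

theory Submission
  imports Defs
begin

definition gpath :: "'a set \<Rightarrow> 'a set set \<Rightarrow> 'a list \<Rightarrow> bool" where
  "gpath V E p \<longleftrightarrow> distinct p \<and> set p \<subseteq> V \<and> (\<forall>i. Suc i < length p \<longrightarrow> {p!i, p!Suc i} \<in> E)"

lemma edge_other:
  assumes "graph V E" "e \<in> E" "x \<in> e"
  shows "\<exists>y. y \<noteq> x \<and> e = {x, y} \<and> y \<in> V"
proof -
  have "card e = 2" "e \<subseteq> V" using assms unfolding graph_def by auto
  then obtain a b where ab: "a \<noteq> b" "e = {a,b}" by (meson card_2_iff)
  then show ?thesis using assms(3) \<open>e \<subseteq> V\<close> by auto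
qed

lemma mindeg_cycle:
  assumes g: "graph V E" and md: "\<forall>v\<in>V. deg E v \<ge> 2" and ne: "E \<noteq> {}"
  shows "\<exists>cs. is_cycle V E cs"
proof -
  obtain e where e: "e \<in> E" using ne by blast
  then obtain a b where ab: "a \<noteq> b" "e = {a,b}" "a \<in> V" "b \<in> V"
    using g unfolding graph_def by (metis card_2_iff insert_subset)
  have p0: "gpath V E [a,b]" using ab e unfolding gpath_def by (auto simp: nth_Cons split: nat.splits)
  have bnd: "\<forall>p. gpath V E p \<longrightarrow> length p < card V + 1"
  proof (intro allI impI)
    fix p assume "gpath V E p"
    then have "distinct p" "set p \<subseteq> V" unfolding gpath_def by auto
    then have "length p \<le> card V" using g unfolding graph_def
      by (metis card_mono distinct_card)
    then show "length p < card V + 1" by simp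
  qed
  obtain p where p: "gpath V E p" and pmax: "\<forall>q. gpath V E q \<longrightarrow> length q \<le> length p"
    using ex_has_greatest_nat[of "gpath V E" "[a,b]" length "card V + 1", OF p0 bnd] by blast
  have lp: "length p \<ge> 2" using pmax p0 by fastforce
  have pd: "distinct p" and pV: "set p \<subseteq> V" and pe: "\<And>i. Suc i < length p \<Longrightarrow> {p!i, p!Suc i} \<in> E"
    using p unfolding gpath_def by auto
  define x0 where "x0 = p!0"
  define x1 where "x1 = p!1"
  have "0 < length p" using lp by linarith
  then have "p!0 \<in> set p" by (rule nth_mem)
  then have x0V: "x0 \<in> V" using pV unfolding x0_def by blast
  have "deg E x0 \<ge> 2" using md x0V by auto
  then have c2: "card {e \<in> E. x0 \<in> e} \<ge> 2" unfolding deg_def .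
  have fin: "finite {e \<in> E. x0 \<in> e}"
  proof (rule ccontr)
    assume "infinite {e \<in> E. x0 \<in> e}"
    then have "card {e \<in> E. x0 \<in> e} = 0" by (rule card.infinite)
    then show False using c2 by linarith
  qed
  have "\<not> card {e \<in> E. x0 \<in> e} \<le> Suc 0" using c2 by simp
  then obtain e1 e2 where "e1 \<in> {e \<in> E. x0 \<in> e}" "e2 \<in> {e \<in> E. x0 \<in> e}" "e1 \<noteq> e2"
    using card_le_Suc0_iff_eq[OF fin] by blast
  then obtain e' where e': "e' \<in> E" "x0 \<in> e'" "e' \<noteq> {x0, x1}" by blast
  then obtain y where y: "y \<noteq> x0" "e' = {x0, y}" "y \<in> V" using edge_other[OF g] by blast
  have yx1: "y \<noteq> x1" using y e' by auto
  have "y \<in> set p"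
  proof (rule ccontr)
    assume ny: "y \<notin> set p"
    have "gpath V E (y # p)" unfolding gpath_def
    proof (intro conjI allI impI)
      show "distinct (y # p)" using ny pd by auto
      show "set (y # p) \<subseteq> V" using y pV by auto
      fix i assume i: "Suc i < length (y # p)"
      show "{(y # p) ! i, (y # p) ! Suc i} \<in> E"
      proof (cases i)
        case 0 then show ?thesis using e' y x0_def by (simp add: insert_commute)
      next
        case (Suc j) then show ?thesis using i pe by simp
      qed
    qed
    then show False using pmax by fastforce
  qed
  then obtain j where j: "j < length p" "p!j = y" by (metis in_set_conv_nth)
  have j2: "j \<ge> 2"
  proof -
    have "j \<noteq> 0"
    proof
      assume "j = 0" then show False using j(2) y(1) x0_def by simp
    qed
    moreover have "j \<noteq> 1"
    proof
      assume "j = 1" then show False using j(2) yx1 x1_def by simp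
    qed
    ultimately show ?thesis by simp
  qed
  define cs where "cs = take (Suc j) p"
  have lcs: "length cs = Suc j" using j unfolding cs_def by simp
  have "is_cycle V E cs" unfolding is_cycle_def
  proof (intro conjI allI impI)
    show "3 \<le> length cs" using lcs j2 by simp
    show "distinct cs" using pd cs_def by simp
    show "set cs \<subseteq> V" using pV cs_def by (meson order_trans set_take_subset)
    fix i assume i: "i < length cs"
    show "{cs ! i, cs ! ((i + 1) mod length cs)} \<in> E"
    proof (cases "i = j")
      case True
      then have "(i+1) mod length cs = 0" using lcs by simp
      then show ?thesis using True j e' y lcs x0_def unfolding cs_def by (simp add: insert_commute)
    next
      case False
      then have "i < j" using i lcs by simp
      then have "(i+1) mod length cs = Suc i" using lcs by simp
      then show ?thesis using \<open>i < j\<close> pe j unfolding cs_def by simp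
    qed
  qed
  then show ?thesis by blast
qed

lemma cycle_mono:
  "is_cycle V' E' cs \<Longrightarrow> V' \<subseteq> V \<Longrightarrow> E' \<subseteq> E \<Longrightarrow> is_cycle V E cs"
  unfolding is_cycle_def by blast

lemma many_edges_cycle:
  "graph V E \<Longrightarrow> card V \<le> card E \<Longrightarrow> E \<noteq> {} \<Longrightarrow> \<exists>cs. is_cycle V E cs"
proof (induction "card V" arbitrary: V E rule: less_induct)
  case less
  show ?case
  proof (cases "\<forall>v\<in>V. deg E v \<ge> 2")
    case True then show ?thesis using mindeg_cycle less.prems by blast
  next
    case False
    then obtain v where v: "v \<in> V" "deg E v \<le> 1" by force
    define E' where "E' = {e \<in> E. v \<notin> e}"
    have fV: "finite V" using less.prems unfolding graph_def by auto
    have fE: "finite E" using less.prems fV unfolding graph_def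
      by (meson Pow_iff finite_Pow_iff rev_finite_subset subsetI)
    have g': "graph (V - {v}) E'" using less.prems unfolding graph_def E'_def by auto
    have "card E = card E' + card {e \<in> E. v \<in> e}"
    proof -
      have "E = E' \<union> {e \<in> E. v \<in> e}" unfolding E'_def by auto
      moreover have "E' \<inter> {e \<in> E. v \<in> e} = {}" unfolding E'_def by auto
      ultimately show ?thesis using fE card_Un_disjoint[of E' "{e \<in> E. v \<in> e}"]
        unfolding E'_def by (metis (no_types, lifting) finite_Un)
    qed
    then have cE: "card E \<le> card E' + 1" using v unfolding deg_def by simp
    have cV: "card (V - {v}) = card V - 1" using v fV by simp
    have ne': "E' \<noteq> {}"
    proof
      assume "E' = {}"
      then have "card E \<le> 1" using cE by simp
      moreover obtain e where "e \<in> E" using less.prems by blast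
      then have "card V \<ge> 2" using less.prems fV unfolding graph_def by (metis card_mono)
      ultimately show False using less.prems by simp
    qed
    have "\<exists>cs. is_cycle (V - {v}) E' cs"
    proof (rule less.hyps[OF _ g' _ ne'])
      have "card V > 0" using v fV card_gt_0_iff by blast
      then show "card (V - {v}) < card V" using cV by simp
      show "card (V - {v}) \<le> card E'" using cV cE less.prems by simp
    qed
    then show ?thesis using cycle_mono[of "V - {v}" E' _ V E] E'_def by blast
  qed
qed

lemma forest_card:
  assumes "graph V E" "forest V E" shows "card E \<le> card V"
proof (rule ccontr)
  assume "\<not> card E \<le> card V"
  then have "card V \<le> card E" "E \<noteq> {}" by auto
  then show False using many_edges_cycle[OF assms(1)] assms(2) unfolding forest_def by blast
qed

lemma graph_finE: "graph V E \<Longrightarrow> finite E"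
  unfolding graph_def by (meson Pow_iff finite_Pow_iff rev_finite_subset subsetI)

lemma sum_deg:
  assumes "finite E" "finite A"
  shows "(\<Sum>v\<in>A. deg E v) = (\<Sum>e\<in>E. card (A \<inter> e))"
proof -
  have "(\<Sum>v\<in>A. deg E v) = (\<Sum>v\<in>A. \<Sum>e\<in>E. if v \<in> e then 1 else 0)"
    unfolding deg_def using assms by (simp add: sum.inter_filter[symmetric])
  also have "\<dots> = (\<Sum>e\<in>E. \<Sum>v\<in>A. if v \<in> e then 1 else 0)" by (rule sum.swap)
  also have "\<dots> = (\<Sum>e\<in>E. card (A \<inter> e))"
    using assms by (simp add: sum.inter_filter[symmetric] Int_def)
  finally show ?thesis .
qed

theorem lemma22:
  fixes V :: "'a set" and E :: "'a set set" and R F :: "'a set"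
    and k l :: nat and \<epsilon> :: real
  assumes "0 < \<epsilon>" and "\<epsilon> < 1"
    and "graph V E"
    and "\<forall>v\<in>V. deg E v \<ge> 2"
    and "\<exists>v\<in>V. deg E v \<ge> 3"
    and "R \<subseteq> V"
    and "riafd_set V E R l F" and "card F = k"
    and "real (\<Sum>v\<in>F. deg E v) \<ge> (4 - 2 * \<epsilon>) / (1 - \<epsilon>) * (real k + real l)"
  shows "(\<Sum>v\<in>F. omega E R v) / (\<Sum>v\<in>V. omega E R v) \<ge> 1 / (3 - \<epsilon>)"
proof -
  note g = assms(3)
  have fV: "finite V" using g unfolding graph_def by auto
  have fE: "finite E" using g by (rule graph_finE)
  have FV: "F \<subseteq> V - R" and lf: "l_forest l (V - F) (del_verts_E E F)"
    using assms(7) unfolding riafd_set_def by auto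
  have fF: "finite F" using FV fV by (meson Diff_subset finite_subset)
  define EH where "EH = del_verts_E E F"
  obtain D where D: "D \<subseteq> EH" "card D \<le> l" "forest (V - F) (EH - D)"
    using lf unfolding l_forest_def EH_def by blast
  have gH: "graph (V - F) (EH - D)"
    using g unfolding graph_def EH_def del_verts_E_def by auto
  have c1: "card (EH - D) \<le> card (V - F)" using forest_card[OF gH D(3)] .
  have fEH: "finite EH" using fE unfolding EH_def del_verts_E_def by simp
  have c2: "card EH \<le> card (EH - D) + card D"
    by (metis D(1) card_Diff_subset fEH finite_subset le_diff_conv order_refl)
  have cVF: "card (V - F) = card V - k" using assms(8) FV fF
    by (metis Diff_subset card_Diff_subset subset_trans)
  have kV: "k \<le> card V" using assms(8) FV fV
    by (metis Diff_subset card_mono subset_trans)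
  have EHsub: "EH \<subseteq> E" unfolding EH_def del_verts_E_def by auto
  have c3: "card E = card EH + card (E - EH)"
    using EHsub fE by (metis card_Diff_subset card_mono finite_subset le_add_diff_inverse)
  have c4: "card (E - EH) \<le> (\<Sum>e\<in>E - EH. card (F \<inter> e))"
  proof -
    have "card (E - EH) = (\<Sum>e\<in>E - EH. 1)" by simp
    also have "\<dots> \<le> (\<Sum>e\<in>E - EH. card (F \<inter> e))"
    proof (rule sum_mono)
      fix e assume "e \<in> E - EH"
      then have "F \<inter> e \<noteq> {}" unfolding EH_def del_verts_E_def by auto
      then show "1 \<le> card (F \<inter> e)" using fF
        by (metis One_nat_def Suc_leI card_gt_0_iff finite_Int)
    qed
    finally show ?thesis .
  qed
  also have "\<dots> \<le> (\<Sum>e\<in>E. card (F \<inter> e))"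
    using fE by (intro sum_mono2) auto
  also have "\<dots> = (\<Sum>v\<in>F. deg E v)" using sum_deg[OF fE fF] by simp
  finally have c5: "card (E - EH) \<le> (\<Sum>v\<in>F. deg E v)" .
  define dF where "dF = (\<Sum>v\<in>F. deg E v)"
  have cE: "card E \<le> card V - k + l + dF" using c1 c2 c3 c5 cVF D(2) unfolding dF_def by linarith
  have hs: "(\<Sum>v\<in>V. deg E v) = 2 * card E"
  proof -
    have "(\<Sum>v\<in>V. deg E v) = (\<Sum>e\<in>E. card (V \<inter> e))" using sum_deg[OF fE fV] .
    also have "\<dots> = (\<Sum>e\<in>E. 2)"
    proof (rule sum.cong)
      fix e assume "e \<in> E"
      then have "V \<inter> e = e" "card e = 2" using g unfolding graph_def by auto
      then show "card (V \<inter> e) = 2" by simp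
    qed simp
    finally show ?thesis by simp
  qed
  have wV: "(\<Sum>v\<in>V. omega E R v) \<le> (\<Sum>v\<in>V. real (deg E v) - 2)"
    by (rule sum_mono) (use assms(4) in \<open>auto simp: omega_def\<close>)
  also have "\<dots> = real (\<Sum>v\<in>V. deg E v) - 2 * real (card V)"
    by (simp add: sum_subtractf)
  also have "\<dots> = 2 * real (card E) - 2 * real (card V)" using hs by simp
  finally have wV2: "(\<Sum>v\<in>V. omega E R v) \<le> 2 * real dF - 2 * real k + 2 * real l"
    using cE kV by (simp add: of_nat_diff) linarith?
  have wF: "(\<Sum>v\<in>F. omega E R v) = real dF - 2 * real k"
  proof -
    have "(\<Sum>v\<in>F. omega E R v) = (\<Sum>v\<in>F. real (deg E v) - 2)"
      using FV by (intro sum.cong) (auto simp: omega_def)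
    then show ?thesis using assms(8) unfolding dF_def by (simp add: sum_subtractf)
  qed
  have hyp: "real dF \<ge> (4 - 2 * \<epsilon>) / (1 - \<epsilon>) * (real k + real l)"
    using assms(9) unfolding dF_def by simp
  have key: "(1 - \<epsilon>) * real dF \<ge> (4 - 2 * \<epsilon>) * (real k + real l)"
    using hyp assms(1,2) by (simp add: field_simps)
  have kpos: "k > 0"
  proof (rule ccontr)
    assume "\<not> k > 0"
    then have "F = {}" using assms(8) fF by simp
    then have "dF = 0" "k = 0" using assms(8) unfolding dF_def by auto
    then have "(4 - 2 * \<epsilon>) * real l \<le> 0" using key by simp
    then have "real l \<le> 0" using assms(2) by (simp add: mult_le_0_iff)
    then have "l = 0" by simp
    then have "card D = 0" using D(2) by simp
    then have "D = {}" using D(1) fEH by (meson card_0_eq finite_subset)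
    then have fo: "forest V E" using D(3) \<open>F = {}\<close> unfolding EH_def del_verts_E_def by simp
    obtain v where "v \<in> V" "deg E v \<ge> 3" using assms(5) by blast
    then have "E \<noteq> {}" unfolding deg_def by auto
    then show False using mindeg_cycle[OF g assms(4)] fo unfolding forest_def by blast
  qed
  have wFpos: "(\<Sum>v\<in>F. omega E R v) > 0"
  proof -
    have l0: "(4 - 2 * \<epsilon>) * real l \<ge> 0" using assms(2) by simp
    have "(4 - 2 * \<epsilon>) * (real k + real l) = (4 - 2 * \<epsilon>) * real k + (4 - 2 * \<epsilon>) * real l"
      by (simp add: algebra_simps)
    then have a: "(1 - \<epsilon>) * real dF \<ge> (4 - 2 * \<epsilon>) * real k" using key l0 by linarith
    have b: "(4 - 2 * \<epsilon>) * real k - 2 * (1 - \<epsilon>) * real k = 2 * real k" by (simp add: algebra_simps)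
    have c: "(1 - \<epsilon>) * (real dF - 2 * real k) = (1 - \<epsilon>) * real dF - 2 * (1 - \<epsilon>) * real k"
      by (simp add: algebra_simps)
    have "(1 - \<epsilon>) * (real dF - 2 * real k) > 0" using a b c kpos by linarith
    then show ?thesis using wF assms(2) by (simp add: zero_less_mult_iff)
  qed
  have main: "(\<Sum>v\<in>V. omega E R v) \<le> (3 - \<epsilon>) * (\<Sum>v\<in>F. omega E R v)"
  proof -
    have l0: "(2 - 2 * \<epsilon>) * real l \<ge> 0" using assms(2) by simp
    have "(4 - 2 * \<epsilon>) * (real k + real l) = (4 - 2 * \<epsilon>) * real k + 2 * real l + (2 - 2 * \<epsilon>) * real l"
      by (simp add: algebra_simps)
    then have "(4 - 2 * \<epsilon>) * (real k + real l) \<ge> (4 - 2 * \<epsilon>) * real k + 2 * real l"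
      using l0 by linarith
    then have "(1 - \<epsilon>) * real dF \<ge> (4 - 2 * \<epsilon>) * real k + 2 * real l" using key by linarith
    moreover have "(3 - \<epsilon>) * (real dF - 2 * real k) = (1 - \<epsilon>) * real dF + 2 * real dF - (6 - 2 * \<epsilon>) * real k"
      by (simp add: algebra_simps)
    moreover have "(6 - 2 * \<epsilon>) * real k = (4 - 2 * \<epsilon>) * real k + 2 * real k"
      by (simp add: algebra_simps)
    moreover have "(3 - \<epsilon>) * (\<Sum>v\<in>F. omega E R v) = (3 - \<epsilon>) * (real dF - 2 * real k)"
      using wF by simp
    ultimately show ?thesis using wV2 by linarith
  qed
  have wVpos: "(\<Sum>v\<in>V. omega E R v) > 0"
  proof -
    have "(\<Sum>v\<in>F. omega E R v) \<le> (\<Sum>v\<in>V. omega E R v)"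
      using FV fV assms(4) by (intro sum_mono2) (auto simp: omega_def)
    then show ?thesis using wFpos by linarith
  qed
  have e3: "3 - \<epsilon> > 0" using assms(2) by simp
  have "(\<Sum>v\<in>V. omega E R v) / (3 - \<epsilon>) \<le> (\<Sum>v\<in>F. omega E R v)"
    using main e3 by (simp add: pos_divide_le_eq mult.commute)
  then have "1 / (3 - \<epsilon>) * (\<Sum>v\<in>V. omega E R v) \<le> (\<Sum>v\<in>F. omega E R v)" by simp
  then show ?thesis by (rule iffD2[OF pos_le_divide_eq[OF wVpos]])
qed

end
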